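(* Let $K>0$, let $H_1,H_2$ be real Hilbert spaces, let $B=H_1\times H_2$ with the symmetric bilinear form $\lfloor (x_1,x_2),(y_1,y_2)\rfloor=K^2\langle x_1,y_1\rangle_{H_1}-\langle x_2,y_2\rangle_{H_2}$, and let $q(b)=\frac12\lfloor b,b\rfloor$. Then: (1) a nonempty set $A\subset B$ is $q$-positive if and only if $A$ is the graph of a $K$-Lipschitz mapping $f:P_{H_1}(A)\to H_2$, where $P_{H_1}(A)=\{x_1:\exists x_2,\ (x_1,x_2)\in A\}$; (2) a set $A\subset B$ is maximally $q$-positive if and only if $A$ is the graph of a $K$-Lipschitz mapping $f:H_1\to H_2$.
   Context: A nonempty $A\subset B$ is $q$-positive if $q(b-c)\ge0$ for all $b,c\in A$; maximally $q$-positive if $q$-positive and not properly contained in another $q$-positive set. A mapping $f:D\to H_2$, $D\subset H_1$, is $K$-Lipschitz if $\|f(x)-f(y)\|_{H_2}\le K\|x-y\|_{H_1}$ for all $x,y\in D$. *)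

theory Defs
  imports "HOL-Analysis.Analysis"
begin

definition bform :: "real \<Rightarrow> ('a::real_inner \<times> 'b::real_inner) \<Rightarrow> ('a \<times> 'b) \<Rightarrow> real" where
  "bform K b c = K\<^sup>2 * (fst b \<bullet> fst c) - (snd b \<bullet> snd c)"

definition qform :: "real \<Rightarrow> ('a::real_inner \<times> 'b::real_inner) \<Rightarrow> real" where
  "qform K b = (1/2) * bform K b b"

definition q_positive :: "(('a::real_inner \<times> 'b::real_inner) \<Rightarrow> real) \<Rightarrow> ('a \<times> 'b) set \<Rightarrow> bool" where
  "q_positive q A \<longleftrightarrow> A \<noteq> {} \<and> (\<forall>b\<in>A. \<forall>c\<in>A. q (b - c) \<ge> 0)"

definition max_q_positive :: "(('a::real_inner \<times> 'b::real_inner) \<Rightarrow> real) \<Rightarrow> ('a \<times> 'b) set \<Rightarrow> bool" where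
  "max_q_positive q A \<longleftrightarrow> q_positive q A \<and> (\<forall>A'. q_positive q A' \<and> A \<subseteq> A' \<longrightarrow> A' = A)"

definition K_lipschitz_on :: "real \<Rightarrow> 'a::real_normed_vector set \<Rightarrow> ('a \<Rightarrow> 'b::real_normed_vector) \<Rightarrow> bool" where
  "K_lipschitz_on K D f \<longleftrightarrow> (\<forall>x\<in>D. \<forall>y\<in>D. norm (f x - f y) \<le> K * norm (x - y))"

definition graph_on :: "'a set \<Rightarrow> ('a \<Rightarrow> 'b) \<Rightarrow> ('a \<times> 'b) set" where
  "graph_on D f = {(x, f x) | x. x \<in> D}"

end

theory Submission imports Defs begin
lemma continuous_on_Max_fin:
  fixes g :: "'i \<Rightarrow> 'a::topological_space \<Rightarrow> real"
  assumes "finite I" "I \<noteq> {}" "\<And>i. i \<in> I \<Longrightarrow> continuous_on S (g i)"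
  shows "continuous_on S (\<lambda>y. Max ((\<lambda>i. g i y) ` I))"
  using assms
proof (induction I rule: finite_ne_induct)
  case (singleton x)
  then show ?case by simp
next
  case (insert x F)
  have "continuous_on S (\<lambda>y. max (g x y) (Max ((\<lambda>i. g i y) ` F)))"
    using insert by (intro continuous_on_max) auto
  moreover have "\<And>y. Max ((\<lambda>i. g i y) ` insert x F) = max (g x y) (Max ((\<lambda>i. g i y) ` F))"
    using insert by simp
  ultimately show ?case by simp
qed

lemma small_t:
  fixes a b :: real
  assumes "b \<ge> 0" "\<And>t. 0 < t \<Longrightarrow> t \<le> 1 \<Longrightarrow> 0 \<le> 2*t*a + t^2*b"
  shows "0 \<le> a"
proof (rule ccontr)
  assume "\<not> 0 \<le> a"
  define t where "t = min 1 (-a/(b+1))"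
  have t0: "0 < t" "t \<le> 1" using \<open>\<not> 0 \<le> a\<close> assms(1) by (auto simp: t_def intro!: divide_neg_pos)
  have "t * b \<le> (-a/(b+1)) * b" unfolding t_def using assms(1) by (intro mult_right_mono) auto
  also have "\<dots> < -a" using \<open>\<not> 0 \<le> a\<close> assms(1) by (simp add: field_simps)
  finally have "2*a + t*b < 0" using \<open>\<not> 0 \<le> a\<close> by linarith
  hence "t * (2*a + t*b) < 0" using t0 by (simp add: mult_pos_neg)
  moreover have "0 \<le> 2*t*a + t^2*b" using assms(2) t0 by auto
  ultimately show False by (simp add: algebra_simps power2_eq_square)
qed

lemma real_key:
  fixes L A B nv na vv aa V1 V2 :: real
  assumes "nv = V1 + V2 - 2 * vv" "na = A + B - 2 * aa" "V1 = L * A" "V2 = L * B" "nv \<le> na"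
  shows "(L - 1) * (A + B) / 2 + aa \<le> vv"
proof -
  have "(L - 1) * (A + B) = L*A + L*B - A - B" by (simp add: algebra_simps)
  thus ?thesis using assms by linarith
qed

lemma double_sum_id:
  fixes \<mu> na :: "'i \<Rightarrow> real" and a :: "'i \<Rightarrow> 'a::real_inner" and c :: real
  assumes fin: "finite A" and s1: "sum \<mu> A = 1"
  shows "(\<Sum>x\<in>A. \<Sum>x'\<in>A. \<mu> x * \<mu> x' * (c * (na x + na x') / 2 + a x \<bullet> a x'))
       = c * (\<Sum>x\<in>A. \<mu> x * na x) + (\<Sum>x\<in>A. \<mu> x *\<^sub>R a x) \<bullet> (\<Sum>x\<in>A. \<mu> x *\<^sub>R a x)"
proof -
  define P where "P = (\<Sum>x\<in>A. \<mu> x * na x)"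
  define U where "U = (\<Sum>x\<in>A. \<mu> x *\<^sub>R a x)"
  have inner: "(\<Sum>x'\<in>A. \<mu> x * \<mu> x' * (c * (na x + na x') / 2 + a x \<bullet> a x'))
      = \<mu> x * (c/2) * na x + (c/2) * \<mu> x * P + \<mu> x * (a x \<bullet> U)" for x
  proof -
    have "(\<Sum>x'\<in>A. \<mu> x * \<mu> x' * (c * (na x + na x') / 2 + a x \<bullet> a x'))
        = (\<Sum>x'\<in>A. (\<mu> x * (c/2) * na x) * \<mu> x' + ((c/2) * \<mu> x) * (\<mu> x' * na x') + \<mu> x * (a x \<bullet> (\<mu> x' *\<^sub>R a x')))"
      by (rule sum.cong) (simp_all add: algebra_simps)
    also have "\<dots> = (\<mu> x * (c/2) * na x) * sum \<mu> A + ((c/2) * \<mu> x) * P + \<mu> x * (a x \<bullet> U)"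
      unfolding P_def U_def sum.distrib sum_distrib_left[symmetric] inner_sum_right[symmetric] by simp
    finally show ?thesis using s1 by simp
  qed
  have "(\<Sum>x\<in>A. \<Sum>x'\<in>A. \<mu> x * \<mu> x' * (c * (na x + na x') / 2 + a x \<bullet> a x'))
      = (\<Sum>x\<in>A. (c/2) * (\<mu> x * na x) + ((c/2) * P) * \<mu> x + (\<mu> x *\<^sub>R a x) \<bullet> U)"
    unfolding inner by (rule sum.cong) (simp_all add: algebra_simps)
  also have "\<dots> = (c/2) * P + ((c/2) * P) * sum \<mu> A + U \<bullet> U"
    unfolding P_def U_def sum.distrib sum_distrib_left[symmetric] inner_sum_left[symmetric] by simp
  finally show ?thesis using s1 unfolding P_def U_def by simp
qed

lemma finite_kirsz:
  fixes f :: "'a::real_inner \<Rightarrow> 'b::real_inner"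
  assumes finD: "finite D" and x0: "x0 \<notin> D"
    and lip: "\<And>x y. x \<in> D \<Longrightarrow> y \<in> D \<Longrightarrow> norm (f x - f y) \<le> norm (x - y)"
  shows "\<exists>y. \<forall>x\<in>D. norm (f x - y) \<le> norm (x - x0)"
proof (cases "D = {}")
  case True then show ?thesis by simp
next
  case Dne: False
  have rpos: "norm (x - x0) > 0" if "x \<in> D" for x using that x0 by auto
  define C where "C = convex hull (f ` D)"
  have Ccomp: "compact C" unfolding C_def using finD by (simp add: finite_imp_compact_convex_hull)
  have Cne: "C \<noteq> {}" unfolding C_def using Dne by simp
  define \<Phi> where "\<Phi> y = Max ((\<lambda>x. norm (y - f x)^2 / norm (x - x0)^2) ` D)" for y
  have "continuous_on C \<Phi>"
    unfolding \<Phi>_def using finD Dne x0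
    by (intro continuous_on_Max_fin) (auto intro!: continuous_intros)
  then obtain y where yC: "y \<in> C" and ymin: "\<And>z. z \<in> C \<Longrightarrow> \<Phi> y \<le> \<Phi> z"
    using continuous_attains_inf[OF Ccomp Cne] by blast
  define L where "L = \<Phi> y"
  have leL: "norm (y - f x)^2 / norm (x - x0)^2 \<le> L" if "x \<in> D" for x
    unfolding L_def \<Phi>_def using finD that by auto
  show ?thesis
  proof (cases "L \<le> 1")
    case True
    have "norm (f x - y) \<le> norm (x - x0)" if "x \<in> D" for x
    proof -
      have "norm (y - f x)^2 / norm (x - x0)^2 \<le> 1" using leL[OF that] True by linarith
      hence "norm (y - f x)^2 \<le> norm (x - x0)^2" using rpos[OF that] by (simp add: divide_le_eq)
      thus ?thesis by (simp add: norm_minus_commute power2_le_iff_abs_le)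
    qed
    thus ?thesis by blast
  next
    case False
    hence L1: "L > 1" by simp
    define A where "A = {x\<in>D. norm (y - f x)^2 / norm (x - x0)^2 = L}"
    have finA: "finite A" unfolding A_def using finD by simp
    have AD: "A \<subseteq> D" unfolding A_def by auto
    have Ane: "A \<noteq> {}"
    proof -
      have "L \<in> (\<lambda>x. norm (y - f x)^2 / norm (x - x0)^2) ` D"
        unfolding L_def \<Phi>_def using finD Dne by (intro Max_in) auto
      thus ?thesis unfolding A_def by auto
    qed
    have actA: "norm (f x - y)^2 = L * norm (x - x0)^2" if "x \<in> A" for x
    proof -
      have "norm (y - f x)^2 / norm (x - x0)^2 = L" "x \<in> D" using that unfolding A_def by auto
      thus ?thesis using rpos[of x] by (simp add: field_simps norm_minus_commute)
    qed
    define z where "z x = (x, f x)" for x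
    have injz: "inj_on z A" unfolding z_def inj_on_def by auto
    define Z where "Z = convex hull (z ` A)"
    have Zcomp: "compact Z" unfolding Z_def using finA by (simp add: finite_imp_compact_convex_hull)
    have Zne: "Z \<noteq> {}" unfolding Z_def using Ane by simp
    have "continuous_on Z (\<lambda>p. norm (snd p - y))" by (intro continuous_intros)
    then obtain p where pZ: "p \<in> Z" and pmin: "\<And>q. q \<in> Z \<Longrightarrow> norm (snd p - y) \<le> norm (snd q - y)"
      using continuous_attains_inf[OF Zcomp Zne] by blast
    obtain u where u0: "\<And>w. w \<in> z ` A \<Longrightarrow> 0 \<le> u w" and u1: "sum u (z ` A) = 1"
      and up: "(\<Sum>w\<in>z ` A. u w *\<^sub>R w) = p"
      using pZ unfolding Z_def convex_hull_finite[OF finite_imageI[OF finA]] by blast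
    define \<mu> where "\<mu> x = u (z x)" for x
    have \<mu>0: "\<And>x. x \<in> A \<Longrightarrow> 0 \<le> \<mu> x" unfolding \<mu>_def using u0 by auto
    have \<mu>1: "sum \<mu> A = 1" unfolding \<mu>_def using u1 sum.reindex[OF injz, of u] by simp
    have \<mu>p: "(\<Sum>x\<in>A. \<mu> x *\<^sub>R z x) = p"
      unfolding \<mu>_def using up sum.reindex[OF injz, of "\<lambda>w. u w *\<^sub>R w"] by (simp add: o_def)
    have sndp: "snd p = (\<Sum>x\<in>A. \<mu> x *\<^sub>R f x)"
      unfolding \<mu>p[symmetric] by (simp add: snd_sum z_def)
    define w where "w = snd p - y"
    have A1: "w \<bullet> (f x - y) \<ge> norm w ^ 2" if "x \<in> A" for x
    proof -
      have "0 \<le> w \<bullet> (f x - snd p)"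
      proof (rule small_t[of "norm (f x - snd p)^2"])
        fix t :: real assume t: "0 < t" "t \<le> 1"
        have zx: "z x \<in> Z" unfolding Z_def using that by (simp add: hull_inc)
        have "p + t *\<^sub>R (z x - p) \<in> Z"
        proof -
          have "p + t *\<^sub>R (z x - p) = (1 - t) *\<^sub>R p + t *\<^sub>R z x" by (simp add: algebra_simps)
          moreover have "convex Z" unfolding Z_def by simp
          ultimately show ?thesis using pZ zx t by (simp add: convexD)
        qed
        from pmin[OF this] have "norm w \<le> norm (w + t *\<^sub>R (f x - snd p))"
          by (simp add: w_def z_def algebra_simps)
        hence "norm w ^2 \<le> norm (w + t *\<^sub>R (f x - snd p)) ^2" by (simp add: power_mono)
        moreover have "norm (w + t *\<^sub>R (f x - snd p))^2 = norm w^2 + 2*t*(w \<bullet> (f x - snd p)) + t^2 * norm (f x - snd p)^2"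
          unfolding power2_norm_eq_inner by (simp add: inner_add_left inner_add_right inner_commute algebra_simps power2_eq_square)
        ultimately show "0 \<le> 2*t*(w \<bullet> (f x - snd p)) + t^2 * norm (f x - snd p)^2"
          by linarith
      qed simp
      moreover have "w \<bullet> (f x - y) = w \<bullet> (f x - snd p) + w \<bullet> w"
        by (simp add: w_def inner_diff_right)
      ultimately show ?thesis by (simp add: power2_norm_eq_inner)
    qed
    have w0: "w = 0"
    proof (rule ccontr)
      assume wne: "w \<noteq> 0"
      have spC: "snd p \<in> C"
      proof -
        have "snd p \<in> snd ` Z" using pZ by blast
        also have "snd ` Z = convex hull (snd ` z ` A)" unfolding Z_def
          by (rule convex_hull_linear_image) (rule bounded_linear.linear[OF bounded_linear_snd])
        also have "\<dots> \<subseteq> C" unfolding C_def z_def using AD by (intro hull_mono) auto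
        finally show ?thesis .
      qed
      have ev: "eventually (\<lambda>t. \<forall>x\<in>D. norm ((y + t *\<^sub>R w) - f x)^2 / norm (x - x0)^2 < L) (at_right 0)"
      proof (rule eventually_ball_finite[OF finD], rule ballI)
        fix x assume xD: "x \<in> D"
        show "eventually (\<lambda>t. norm ((y + t *\<^sub>R w) - f x)^2 / norm (x - x0)^2 < L) (at_right 0)"
        proof (cases "x \<in> A")
          case True
          show ?thesis unfolding eventually_at_right_field
          proof (intro exI[of _ 1] conjI allI impI)
            fix t :: real assume t: "0 < t" "t < 1"
            have "norm ((y + t *\<^sub>R w) - f x)^2 = norm (f x - y)^2 - 2*t*(w \<bullet> (f x - y)) + t^2 * norm w^2"
              unfolding power2_norm_eq_inner by (simp add: inner_add_left inner_add_right inner_diff_left inner_diff_right algebra_simps power2_eq_square inner_commute)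
            also have "\<dots> \<le> norm (f x - y)^2 - 2*t*norm w^2 + t^2 * norm w^2"
              using A1[OF True] t by simp
            also have "\<dots> < norm (f x - y)^2"
            proof -
              have "norm w^2 > 0" using wne by simp
              hence "t * norm w^2 < 2 * norm w^2" using t by (intro mult_strict_right_mono) auto
              hence "t * (t * norm w^2) < t * (2 * norm w^2)" using t by simp
              hence "t^2 * norm w^2 < 2*t*norm w^2" by (simp add: power2_eq_square algebra_simps)
              thus ?thesis by simp
            qed
            finally have "norm ((y + t *\<^sub>R w) - f x)^2 < L * norm (x - x0)^2"
              using actA[OF True] by simp
            thus "norm ((y + t *\<^sub>R w) - f x)^2 / norm (x - x0)^2 < L"
              using rpos[OF xD] by (simp add: divide_less_eq)
          qed simp
        next
          case False
          have lt: "norm (y - f x)^2 / norm (x - x0)^2 < L"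
            using leL[OF xD] False xD unfolding A_def by auto
          have "((\<lambda>t. norm ((y + t *\<^sub>R w) - f x)^2 / norm (x - x0)^2) \<longlongrightarrow>
                 norm ((y + 0 *\<^sub>R w) - f x)^2 / norm (x - x0)^2) (at_right 0)"
            using rpos[OF xD] by (intro tendsto_intros) auto
          hence "((\<lambda>t. norm ((y + t *\<^sub>R w) - f x)^2 / norm (x - x0)^2) \<longlongrightarrow>
                 norm (y - f x)^2 / norm (x - x0)^2) (at_right 0)" by simp
          from order_tendstoD(2)[OF this lt] show ?thesis .
        qed
      qed
      moreover have "eventually (\<lambda>t. t < 1) (at_right (0::real))"
        unfolding eventually_at_right_field by (intro exI[of _ 1]) auto
      moreover have "eventually (\<lambda>t. t > 0) (at_right (0::real))"
        by (simp add: eventually_at_right_less)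
      ultimately have "eventually (\<lambda>t. t > 0 \<and> t < 1 \<and> (\<forall>x\<in>D. norm ((y + t *\<^sub>R w) - f x)^2 / norm (x - x0)^2 < L)) (at_right (0::real))"
        by (auto elim: eventually_elim2 eventually_mono intro: eventually_conj)
      then obtain t where t: "0 < t" "t < 1" and tall: "\<forall>x\<in>D. norm ((y + t *\<^sub>R w) - f x)^2 / norm (x - x0)^2 < L"
        using eventually_happens'[OF trivial_limit_at_right_real] by blast
      have ytC: "y + t *\<^sub>R w \<in> C"
      proof -
        have "y + t *\<^sub>R w = (1 - t) *\<^sub>R y + t *\<^sub>R snd p" by (simp add: w_def algebra_simps)
        moreover have "convex C" unfolding C_def by simp
        ultimately show ?thesis using yC spC t by (simp add: convexD)
      qed
      have "\<Phi> (y + t *\<^sub>R w) < L" unfolding \<Phi>_def using finD Dne tall by simp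
      with ymin[OF ytC] show False unfolding L_def by simp
    qed
    \<comment> \<open>now y is a convex combination of active values\<close>
    define v where "v x = f x - y" for x
    define a where "a x = x - x0" for x
    have sv: "(\<Sum>x\<in>A. \<mu> x *\<^sub>R v x) = 0"
    proof -
      have "(\<Sum>x\<in>A. \<mu> x *\<^sub>R v x) = (\<Sum>x\<in>A. \<mu> x *\<^sub>R f x) - (\<Sum>x\<in>A. \<mu> x) *\<^sub>R y"
        by (simp add: v_def scaleR_diff_right sum_subtractf scaleR_sum_left)
      also have "\<dots> = 0" using \<mu>1 w0 sndp by (simp add: w_def)
      finally show ?thesis .
    qed
    have key: "v x \<bullet> v x' \<ge> (L - 1) * (norm (a x)^2 + norm (a x')^2) / 2 + a x \<bullet> a x'"
      if "x \<in> A" "x' \<in> A" for x x'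
    proof -
      have "norm (v x - v x') \<le> norm (a x - a x')"
        using lip[of x x'] that AD by (auto simp: v_def a_def)
      hence n: "norm (v x - v x')^2 \<le> norm (a x - a x')^2" by (simp add: power_mono)
      have "norm (v x - v x')^2 = norm (v x)^2 + norm (v x')^2 - 2 * (v x \<bullet> v x')"
        by (simp add: power2_norm_eq_inner inner_diff_left inner_diff_right inner_commute)
      moreover have "norm (a x - a x')^2 = norm (a x)^2 + norm (a x')^2 - 2 * (a x \<bullet> a x')"
        by (simp add: power2_norm_eq_inner inner_diff_left inner_diff_right inner_commute)
      moreover have "norm (v x)^2 = L * norm (a x)^2" "norm (v x')^2 = L * norm (a x')^2"
        using actA that by (auto simp: v_def a_def)
      ultimately show ?thesis using n
        by (rule_tac real_key) auto
    qed
    have "0 = (\<Sum>x\<in>A. \<mu> x *\<^sub>R v x) \<bullet> (\<Sum>x\<in>A. \<mu> x *\<^sub>R v x)" using sv by simp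
    also have "\<dots> = (\<Sum>x\<in>A. \<Sum>x'\<in>A. \<mu> x * \<mu> x' * (v x \<bullet> v x'))"
      by (simp only: inner_sum_left, simp only: inner_scaleR_left inner_sum_right inner_scaleR_right sum_distrib_left, simp add: mult.assoc, (intro sum.cong refl), rule mult.left_commute)
    also have "\<dots> \<ge> (\<Sum>x\<in>A. \<Sum>x'\<in>A. \<mu> x * \<mu> x' * ((L - 1) * (norm (a x)^2 + norm (a x')^2) / 2 + a x \<bullet> a x'))"
      by (intro sum_mono mult_left_mono key) (auto simp: \<mu>0)
    also have "(\<Sum>x\<in>A. \<Sum>x'\<in>A. \<mu> x * \<mu> x' * ((L - 1) * (norm (a x)^2 + norm (a x')^2) / 2 + a x \<bullet> a x'))
       = (L - 1) * (\<Sum>x\<in>A. \<mu> x * norm (a x)^2) + (\<Sum>x\<in>A. \<mu> x *\<^sub>R a x) \<bullet> (\<Sum>x\<in>A. \<mu> x *\<^sub>R a x)"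
      by (rule double_sum_id[OF finA \<mu>1, of "L - 1" "\<lambda>x. norm (a x)^2" a])
    finally have le0: "(L - 1) * (\<Sum>x\<in>A. \<mu> x * norm (a x)^2) + (\<Sum>x\<in>A. \<mu> x *\<^sub>R a x) \<bullet> (\<Sum>x\<in>A. \<mu> x *\<^sub>R a x) \<le> 0" .
    obtain x1 where x1: "x1 \<in> A" "\<mu> x1 > 0"
    proof -
      have "\<exists>x\<in>A. \<mu> x \<noteq> 0" using \<mu>1 by (metis sum.neutral zero_neq_one)
      thus ?thesis using \<mu>0 that by force
    qed
    have "(\<Sum>x\<in>A. \<mu> x * norm (a x)^2) > 0"
    proof (rule sum_pos2[OF finA x1(1)])
      show "0 < \<mu> x1 * norm (a x1)^2" using x1 rpos[of x1] AD by (auto simp: a_def)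
      show "\<And>i. i \<in> A \<Longrightarrow> 0 \<le> \<mu> i * norm (a i)^2" using \<mu>0 by simp
    qed
    hence "(L - 1) * (\<Sum>x\<in>A. \<mu> x * norm (a x)^2) > 0" using L1 by simp
    moreover have "(\<Sum>x\<in>A. \<mu> x *\<^sub>R a x) \<bullet> (\<Sum>x\<in>A. \<mu> x *\<^sub>R a x) \<ge> 0" by simp
    ultimately show ?thesis using le0 by linarith
  qed
qed

lemma small_sq:
  fixes r :: real assumes "0 < r" shows "\<exists>N::nat. \<forall>n\<ge>N. 8 / (real n + 1) < r^2"
proof -
  obtain N :: nat where N: "8 / r^2 < real N" using reals_Archimedean2 by blast
  have "8 / (real n + 1) < r^2" if "n \<ge> N" for n
  proof -
    have "8 / r^2 < real n + 1" using N that by linarith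
    thus ?thesis using assms by (simp add: field_simps)
  qed
  thus ?thesis by blast
qed

lemma para_real:
  fixes d m A B c n :: real
  shows "d \<le> m \<Longrightarrow> m = (A + B + 2 * c) / 4 \<Longrightarrow> n = A + B - 2 * c \<Longrightarrow> n \<le> 2 * A + 2 * B - 4 * d"
  by (simp add: field_simps)

lemma balls_fip:
  fixes c :: "'i \<Rightarrow> 'b::{real_inner,complete_space}" and \<rho> :: "'i \<Rightarrow> real"
  assumes fin: "\<And>F. finite F \<Longrightarrow> F \<subseteq> D \<Longrightarrow> (\<Inter>x\<in>F. cball (c x) (\<rho> x)) \<noteq> {}"
  shows "(\<Inter>x\<in>D. cball (c x) (\<rho> x)) \<noteq> {}"
proof (cases "D = {}")
  case True then show ?thesis by simp
next
  case False
  then obtain a where aD: "a \<in> D" by blast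
  define I where "I F = (\<Inter>x\<in>F. cball (c x) (\<rho> x))" for F
  define dd where "dd F = Inf ((\<lambda>p. norm p ^ 2) ` I F)" for F
  have Ine: "I F \<noteq> {}" if "finite F" "F \<subseteq> D" for F using fin[OF that] unfolding I_def .
  have Ianti: "I G \<subseteq> I F" if "F \<subseteq> G" for F G using that unfolding I_def by auto
  have bdd: "bdd_below ((\<lambda>p. norm p ^ 2) ` I F)" for F by (rule bdd_belowI[of _ 0]) auto
  have ddle: "dd F \<le> norm p ^ 2" if "p \<in> I F" for F p
    unfolding dd_def using that bdd by (intro cInf_lower) auto
  have ddex: "\<exists>p\<in>I F. norm p ^ 2 < dd F + e" if "finite F" "F \<subseteq> D" "e > 0" for F e
  proof -
    have "Inf ((\<lambda>p. norm p ^ 2) ` I F) < dd F + e" using that(3) unfolding dd_def by simp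
    from cInf_lessD[OF _ this] Ine[OF that(1,2)] show ?thesis by auto
  qed
  have ddmono: "dd F \<le> dd G" if "F \<subseteq> G" "finite G" "G \<subseteq> D" for F G
    unfolding dd_def[of G] using Ine[OF that(2,3)] Ianti[OF that(1)] ddle
    by (intro cInf_greatest) auto
  define B where "B = (norm (c a) + \<rho> a)^2"
  have ddB: "dd F \<le> B" if "finite F" "F \<subseteq> D" for F
  proof -
    have fi: "finite (insert a F)" "insert a F \<subseteq> D" using that aD by auto
    obtain p where p: "p \<in> I (insert a F)" using Ine[OF fi] by blast
    have "norm p \<le> norm (c a) + \<rho> a"
    proof -
      have "dist (c a) p \<le> \<rho> a" using p unfolding I_def by auto
      thus ?thesis using norm_triangle_sub[of p "c a"] by (simp add: dist_norm norm_minus_commute)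
    qed
    hence "norm p ^ 2 \<le> B" unfolding B_def by (intro power_mono) auto
    moreover have "dd F \<le> dd (insert a F)" using ddmono fi by blast
    ultimately show ?thesis using ddle[OF p] by linarith
  qed
  have para: "norm (p - q)^2 \<le> 2 * norm p^2 + 2 * norm q^2 - 4 * dd F"
    if "F \<subseteq> G" "p \<in> I G" "q \<in> I F" for F G p q
  proof -
    have cv: "convex (I F)" unfolding I_def by (intro convex_INT) auto
    have "(1/2) *\<^sub>R p + (1/2) *\<^sub>R q \<in> I F"
      using Ianti[OF that(1)] that(2,3) by (intro convexD[OF cv]) auto
    from ddle[OF this] have "dd F \<le> norm ((1/2) *\<^sub>R p + (1/2) *\<^sub>R q)^2" .
    moreover have "norm ((1/2) *\<^sub>R p + (1/2) *\<^sub>R q)^2 = (norm p^2 + norm q^2 + 2 * (p \<bullet> q)) / 4"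
      unfolding power2_norm_eq_inner by (simp add: inner_add_left inner_add_right inner_commute algebra_simps)
    moreover have "norm (p - q)^2 = norm p^2 + norm q^2 - 2 * (p \<bullet> q)"
      unfolding power2_norm_eq_inner by (simp add: inner_diff_left inner_diff_right inner_commute algebra_simps)
    ultimately show ?thesis by (rule para_real)
  qed
  define S where "S = {dd F | F. finite F \<and> F \<subseteq> D}"
  define s where "s = Sup S"
  have Sne: "S \<noteq> {}" unfolding S_def by auto
  have Sbdd: "bdd_above S" unfolding S_def using ddB by (intro bdd_aboveI[of _ B]) auto
  have dds: "dd F \<le> s" if "finite F" "F \<subseteq> D" for F
    unfolding s_def using Sbdd that by (intro cSup_upper) (auto simp: S_def)
  have "\<forall>n::nat. \<exists>F. finite F \<and> F \<subseteq> D \<and> s - 1 / (real n + 1) < dd F"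
  proof
    fix n :: nat
    have "s - 1 / (real n + 1) < Sup S" unfolding s_def by simp
    from less_cSupD[OF Sne this] show "\<exists>F. finite F \<and> F \<subseteq> D \<and> s - 1 / (real n + 1) < dd F"
      unfolding S_def by auto
  qed
  then obtain Fs where Fs: "\<And>n. finite (Fs n) \<and> Fs n \<subseteq> D \<and> s - 1 / (real n + 1) < dd (Fs n)"
    by metis
  define Gs where "Gs n = (\<Union>k\<le>n. Fs k)" for n
  have Gsfin: "finite (Gs n)" "Gs n \<subseteq> D" for n unfolding Gs_def using Fs by auto
  have Gsmono: "Gs n \<subseteq> Gs m" if "n \<le> m" for n m unfolding Gs_def using that by (auto intro: le_trans)
  have Gsdd: "s - 1 / (real n + 1) < dd (Gs n)" for n
  proof -
    have "dd (Fs n) \<le> dd (Gs n)" using Gsfin by (intro ddmono) (auto simp: Gs_def)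
    thus ?thesis using Fs[of n] by linarith
  qed
  have "\<forall>n. \<exists>p\<in>I (Gs n). norm p ^ 2 < dd (Gs n) + 1 / (real n + 1)"
    using ddex Gsfin by auto
  then obtain p where p: "\<And>n. p n \<in> I (Gs n)" and pn: "\<And>n. norm (p n) ^ 2 < dd (Gs n) + 1 / (real n + 1)"
    by metis
  have pns: "norm (p n) ^ 2 < s + 1 / (real n + 1)" for n using pn[of n] dds[OF Gsfin] by smt
  have close: "norm (q - p n)^2 < 8 / (real n + 1)"
    if "Gs n \<subseteq> G" "finite G" "G \<subseteq> D" "q \<in> I G" "norm q ^ 2 < s + 1 / (real m + 1)" "n \<le> m" for n m G q
  proof -
    have "norm (q - p n)^2 \<le> 2 * norm q^2 + 2 * norm (p n)^2 - 4 * dd (Gs n)"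
      using para[OF that(1) that(4) p[of n]] .
    moreover have "1 / (real m + 1) \<le> 1 / (real n + 1)" using that(6) by (simp add: frac_le)
    ultimately show ?thesis using that(5) pns[of n] Gsdd[of n] by simp
  qed
  have "Cauchy p"
  proof (rule CauchyI)
    fix e :: real assume "0 < e"
    from small_sq[OF this] obtain N where N: "\<And>n. n \<ge> N \<Longrightarrow> 8 / (real n + 1) < e^2" by blast
    have "norm (p m - p n) < e" if "m \<ge> N" "n \<ge> N" for m n
    proof -
      have "norm (p m - p n)^2 < e^2"
      proof (cases "n \<le> m")
        case True
        have "norm (p m - p n)^2 < 8 / (real n + 1)"
          using close[OF Gsmono[OF True] Gsfin p[of m] pns[of m] True] .
        thus ?thesis using N[OF that(2)] by linarith
      next
        case False
        hence "m \<le> n" by simp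
        have "norm (p n - p m)^2 < 8 / (real m + 1)"
          using close[OF Gsmono[OF \<open>m \<le> n\<close>] Gsfin p[of n] pns[of n] \<open>m \<le> n\<close>] .
        thus ?thesis using N[OF that(1)] by (simp add: norm_minus_commute)
      qed
      thus ?thesis using \<open>0 < e\<close> by (simp add: power_less_imp_less_base)
    qed
    thus "\<exists>M. \<forall>m\<ge>M. \<forall>n\<ge>M. norm (p m - p n) < e" by blast
  qed
  then obtain P where P: "p \<longlonglongrightarrow> P" using Cauchy_convergent_iff convergent_def by blast
  have "P \<in> cball (c x) (\<rho> x)" if xD: "x \<in> D" for x
  proof -
    have Hfin: "finite (insert x (Gs n))" "insert x (Gs n) \<subseteq> D" for n using Gsfin xD by auto
    have "\<forall>n. \<exists>q\<in>I (insert x (Gs n)). norm q ^ 2 < dd (insert x (Gs n)) + 1 / (real n + 1)"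
      using ddex Hfin by auto
    then obtain q where q: "\<And>n. q n \<in> I (insert x (Gs n))"
      and qn: "\<And>n. norm (q n) ^ 2 < dd (insert x (Gs n)) + 1 / (real n + 1)" by metis
    have qns: "norm (q n) ^ 2 < s + 1 / (real n + 1)" for n using qn[of n] dds[OF Hfin] by smt
    have "(\<lambda>n. q n - p n) \<longlonglongrightarrow> 0"
    proof (rule LIMSEQ_I)
      fix r :: real assume "0 < r"
      from small_sq[OF this] obtain N where N: "\<And>n. n \<ge> N \<Longrightarrow> 8 / (real n + 1) < r^2" by blast
      have "norm (q n - p n - 0) < r" if "n \<ge> N" for n
      proof -
        have "norm (q n - p n)^2 < 8 / (real n + 1)"
          using close[OF _ Hfin q[of n] qns[of n] order_refl] by auto
        hence "norm (q n - p n)^2 < r^2" using N[OF that] by linarith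
        thus ?thesis using \<open>0 < r\<close> by (simp add: power_less_imp_less_base)
      qed
      thus "\<exists>no. \<forall>n\<ge>no. norm (q n - p n - 0) < r" by blast
    qed
    from tendsto_add[OF this P] have "q \<longlonglongrightarrow> P" by simp
    moreover have "\<forall>n. q n \<in> cball (c x) (\<rho> x)" using q unfolding I_def by auto
    ultimately show ?thesis using closed_cball
      by (metis closed_sequentially)
  qed
  thus ?thesis by blast
qed

lemma extend_point:
  fixes f :: "'a::real_inner \<Rightarrow> 'b::{real_inner,complete_space}"
  assumes K: "K > 0" and x0: "x0 \<notin> D" and lip: "K_lipschitz_on K D f"
  shows "\<exists>y. \<forall>x\<in>D. norm (f x - y) \<le> K * norm (x - x0)"
proof -
  define g where "g x = (1/K) *\<^sub>R f x" for x
  have glip: "norm (g x - g x') \<le> norm (x - x')" if "x \<in> D" "x' \<in> D" for x x'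
  proof -
    have "norm (g x - g x') = norm (f x - f x') / K"
      unfolding g_def using K by (simp add: scaleR_diff_right[symmetric] divide_inverse mult.commute)
    also have "\<dots> \<le> K * norm (x - x') / K" using lip that K unfolding K_lipschitz_on_def
      by (intro divide_right_mono) auto
    finally show ?thesis using K by simp
  qed
  have "(\<Inter>x\<in>D. cball (g x) (norm (x - x0))) \<noteq> {}"
  proof (rule balls_fip)
    fix F assume F: "finite F" "F \<subseteq> D"
    have "x0 \<notin> F" using F x0 by auto
    from finite_kirsz[OF F(1) this] glip F obtain y where "\<forall>x\<in>F. norm (g x - y) \<le> norm (x - x0)"
      by (metis subsetD)
    hence "y \<in> (\<Inter>x\<in>F. cball (g x) (norm (x - x0)))" by (simp add: dist_norm)
    thus "(\<Inter>x\<in>F. cball (g x) (norm (x - x0))) \<noteq> {}" by blast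
  qed
  hence "\<exists>y. \<forall>x\<in>D. norm (g x - y) \<le> norm (x - x0)" by (auto simp: dist_norm) blast
  then obtain y where y: "\<And>x. x \<in> D \<Longrightarrow> norm (g x - y) \<le> norm (x - x0)"
    by blast
  have "norm (f x - K *\<^sub>R y) \<le> K * norm (x - x0)" if "x \<in> D" for x
  proof -
    have "f x - K *\<^sub>R y = K *\<^sub>R (g x - y)" unfolding g_def using K by (simp add: algebra_simps)
    hence "norm (f x - K *\<^sub>R y) = K * norm (g x - y)" using K by simp
    thus ?thesis using y[OF that] K by (simp add: mult_left_mono)
  qed
  thus ?thesis by blast
qed

lemma qform_nonneg_iff:
  fixes b c :: "'a::real_inner \<times> 'b::real_inner"
  assumes K: "K > 0"
  shows "0 \<le> qform K (b - c) \<longleftrightarrow> norm (snd b - snd c) \<le> K * norm (fst b - fst c)"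
proof -
  have "qform K (b - c) = (1/2) * ((K * norm (fst b - fst c))^2 - norm (snd b - snd c)^2)"
    unfolding qform_def bform_def by (simp add: power2_norm_eq_inner power_mult_distrib)
  hence "0 \<le> qform K (b - c) \<longleftrightarrow> norm (snd b - snd c)^2 \<le> (K * norm (fst b - fst c))^2"
  proof -
    have h: "\<And>q X Y::real. q = 1/2 * (X - Y) \<Longrightarrow> (0 \<le> q) = (Y \<le> X)" by auto
    show ?thesis by (rule h) fact
  qed
  also have "\<dots> \<longleftrightarrow> norm (snd b - snd c) \<le> K * norm (fst b - fst c)"
    using K by (subst power2_le_iff_abs_le) auto
  finally show ?thesis .
qed

lemma part1:
  fixes A :: "('a::real_inner \<times> 'b::real_inner) set"
  assumes K: "K > 0" and Ane: "A \<noteq> {}"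
  shows "q_positive (qform K) A \<longleftrightarrow> (\<exists>f. K_lipschitz_on K (fst ` A) f \<and> A = graph_on (fst ` A) f)"
proof
  assume qp: "q_positive (qform K) A"
  have ineq: "norm (snd b - snd c) \<le> K * norm (fst b - fst c)" if "b \<in> A" "c \<in> A" for b c
    using qp that qform_nonneg_iff[OF K] unfolding q_positive_def by blast
  define f where "f x = (SOME y. (x, y) \<in> A)" for x
  have fA: "(x, f x) \<in> A" if "x \<in> fst ` A" for x
  proof -
    from that obtain b where "b \<in> A" "x = fst b" by blast
    hence "\<exists>y. (x, y) \<in> A" by (metis prod.collapse)
    thus ?thesis unfolding f_def by (rule someI_ex)
  qed
  have fstI: "x \<in> fst ` A" if "(x, y) \<in> A" for x y
    using rev_image_eqI[OF that, of x fst] by simp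
  have fu: "y = f x" if "(x, y) \<in> A" for x y
  proof -
    have "(x, f x) \<in> A" using fA[OF fstI[OF that]] .
    from ineq[OF that this] show ?thesis by simp
  qed
  have "K_lipschitz_on K (fst ` A) f"
    unfolding K_lipschitz_on_def
  proof (intro ballI)
    fix x x' assume "x \<in> fst ` A" "x' \<in> fst ` A"
    from ineq[OF fA[OF this(1)] fA[OF this(2)]] show "norm (f x - f x') \<le> K * norm (x - x')" by simp
  qed
  moreover have "A = graph_on (fst ` A) f"
  proof
    show "A \<subseteq> graph_on (fst ` A) f"
    proof
      fix b assume "b \<in> A"
      moreover obtain x y where b: "b = (x, y)" by force
      ultimately have "(x, y) \<in> A" by simp
      thus "b \<in> graph_on (fst ` A) f" unfolding graph_on_def b using fu fstI by blast
    qed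
    show "graph_on (fst ` A) f \<subseteq> A" unfolding graph_on_def using fA by blast
  qed
  ultimately show "\<exists>f. K_lipschitz_on K (fst ` A) f \<and> A = graph_on (fst ` A) f" by blast
next
  assume "\<exists>f. K_lipschitz_on K (fst ` A) f \<and> A = graph_on (fst ` A) f"
  then obtain f where lip: "K_lipschitz_on K (fst ` A) f" and gr: "A = graph_on (fst ` A) f" by blast
  have "0 \<le> qform K (b - c)" if bA: "b \<in> A" and cA: "c \<in> A" for b c
  proof -
    have "b \<in> graph_on (fst ` A) f" "c \<in> graph_on (fst ` A) f" using bA cA gr by metis+
    then obtain x x' where bc: "b = (x, f x)" "c = (x', f x')" and xx: "x \<in> fst ` A" "x' \<in> fst ` A"
      unfolding graph_on_def by blast
    have "norm (f x - f x') \<le> K * norm (x - x')" using lip xx unfolding K_lipschitz_on_def by blast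
    hence "norm (snd b - snd c) \<le> K * norm (fst b - fst c)" using bc by simp
    thus ?thesis using qform_nonneg_iff[OF K, of b c] by simp
  qed
  thus "q_positive (qform K) A" using Ane unfolding q_positive_def by blast
qed

theorem mainTheorem17:
  fixes K :: real
  assumes "K > 0"
  shows "(\<forall>A :: ('a::{real_inner,complete_space} \<times> 'b::{real_inner,complete_space}) set.
           A \<noteq> {} \<longrightarrow>
           (q_positive (qform K) A \<longleftrightarrow>
             (\<exists>f. K_lipschitz_on K (fst ` A) f \<and> A = graph_on (fst ` A) f)))
         \<and> (\<forall>A :: ('a \<times> 'b) set.
           max_q_positive (qform K) A \<longleftrightarrow>
             (\<exists>f. K_lipschitz_on K UNIV f \<and> A = graph_on UNIV f))"
proof (intro conjI allI impI)
  fix A :: "('a \<times> 'b) set"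
  assume "A \<noteq> {}"
  from part1[OF assms this] show "q_positive (qform K) A \<longleftrightarrow>
             (\<exists>f. K_lipschitz_on K (fst ` A) f \<and> A = graph_on (fst ` A) f)" .
next
  fix A :: "('a \<times> 'b) set"
  show "max_q_positive (qform K) A \<longleftrightarrow> (\<exists>f. K_lipschitz_on K UNIV f \<and> A = graph_on UNIV f)"
  proof
    assume mx: "max_q_positive (qform K) A"
    hence qp: "q_positive (qform K) A" and maxi: "\<And>A'. q_positive (qform K) A' \<Longrightarrow> A \<subseteq> A' \<Longrightarrow> A' = A"
      unfolding max_q_positive_def by auto
    have Ane: "A \<noteq> {}" using qp unfolding q_positive_def by simp
    obtain f where lip: "K_lipschitz_on K (fst ` A) f" and gr: "A = graph_on (fst ` A) f"
      using part1[OF assms Ane] qp by blast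
    have "fst ` A = UNIV"
    proof (rule ccontr)
      assume "fst ` A \<noteq> UNIV"
      then obtain x0 where x0: "x0 \<notin> fst ` A" by blast
      obtain y where y: "\<And>x. x \<in> fst ` A \<Longrightarrow> norm (f x - y) \<le> K * norm (x - x0)"
        using extend_point[OF assms x0 lip] by blast
      define f' where "f' = f(x0 := y)"
      have "K_lipschitz_on K (insert x0 (fst ` A)) f'"
        unfolding K_lipschitz_on_def
      proof (intro ballI)
        fix a b assume ab: "a \<in> insert x0 (fst ` A)" "b \<in> insert x0 (fst ` A)"
        show "norm (f' a - f' b) \<le> K * norm (a - b)"
          using ab y lip x0 unfolding K_lipschitz_on_def f'_def
          by (cases "a = x0"; cases "b = x0") (auto simp: norm_minus_commute)
      qed
      moreover have "insert (x0, y) A = graph_on (insert x0 (fst ` A)) f'"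
      proof -
        have "graph_on (insert x0 (fst ` A)) f' = insert (x0, y) (graph_on (fst ` A) f)"
          using x0 unfolding graph_on_def f'_def by auto
        thus ?thesis using gr by simp
      qed
      moreover have "q_positive (qform K) (insert (x0, y) A) \<longleftrightarrow>
          (\<exists>f. K_lipschitz_on K (insert x0 (fst ` A)) f \<and> insert (x0, y) A = graph_on (insert x0 (fst ` A)) f)"
      proof -
        have e: "fst ` insert (x0, y) A = insert x0 (fst ` A)" by simp
        show ?thesis using part1[OF assms, of "insert (x0, y) A"] unfolding e by simp
      qed
      ultimately have "q_positive (qform K) (insert (x0, y) A)" by blast
      from maxi[OF this] have "(x0, y) \<in> A" by blast
      with x0 show False by force
    qed
    thus "\<exists>f. K_lipschitz_on K UNIV f \<and> A = graph_on UNIV f" using lip gr by auto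
  next
    assume "\<exists>f. K_lipschitz_on K UNIV f \<and> A = graph_on UNIV f"
    then obtain f where lip: "K_lipschitz_on K UNIV f" and gr: "A = graph_on UNIV f" by blast
    have fstA: "fst ` A = UNIV" unfolding gr graph_on_def by force
    have Ane: "A \<noteq> {}" using fstA by auto
    have qp: "q_positive (qform K) A" using part1[OF assms Ane] lip gr fstA by auto
    have "A' = A" if qp': "q_positive (qform K) A'" and sub: "A \<subseteq> A'" for A'
    proof
      show "A' \<subseteq> A"
      proof
        fix b assume b: "b \<in> A'"
        obtain x y where bxy: "b = (x, y)" by force
        have "(x, f x) \<in> A'" using sub unfolding gr graph_on_def by auto
        hence "0 \<le> qform K (b - (x, f x))" using qp' b unfolding q_positive_def by blast
        hence "norm (snd b - snd (x, f x)) \<le> K * norm (fst b - fst (x, f x))"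
          using qform_nonneg_iff[OF assms] by blast
        hence "norm (y - f x) \<le> 0" using bxy by simp
        hence "y = f x" by simp
        thus "b \<in> A" using bxy unfolding gr graph_on_def by auto
      qed
    qed (rule sub)
    thus "max_q_positive (qform K) A" using qp unfolding max_q_positive_def by blast
  qed
qed

end
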